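(* If $X$ is a set star Hurewicz space and $Y$ is a compact space, then $X \times Y$ is rectangular set star Hurewicz.
   Context: For a subset $A$ of a space $Z$ and a collection $\mathcal{U}$ of subsets of $Z$, ${\rm St}(A,\mathcal{U}) = \bigcup\{U \in \mathcal{U}: U \cap A \neq \emptyset\}$. A space $X$ is set star Hurewicz if for each nonempty $A \subset X$ and each sequence $(\mathcal{U}_n: n\in\mathbb{N})$ of collections of sets open in $X$ with $\overline{A} \subset \bigcup\mathcal{U}_n$ for all $n$, there are finite $\mathcal{V}_n \subset \mathcal{U}_n$ such that each $x \in A$ lies in ${\rm St}(\bigcup\mathcal{V}_n,\mathcal{U}_n)$ for all but finitely many $n$. The product $X\times Y$ is rectangular set star Hurewicz if for each nonempty set of the form $A \times B \subset X \times Y$ and each sequence $(\mathcal{U}_n: n\in\mathbb{N})$ of collections of sets open in $X\times Y$ with $\overline{A\times B} \subset \bigcup\mathcal{U}_n$ for all $n$, there are finite $\mathcal{V}_n \subset \mathcal{U}_n$ such that each $z \in A \times B$ lies in ${\rm St}(\bigcup\mathcal{V}_n,\mathcal{U}_n)$ for all but finitely many $n$. *)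

theory Defs
  imports "HOL-Analysis.Analysis"
begin

definition St :: "'a set \<Rightarrow> 'a set set \<Rightarrow> 'a set" where
  "St A \<U> = \<Union>{U \<in> \<U>. U \<inter> A \<noteq> {}}"

definition sSH_property :: "'a topology \<Rightarrow> 'a set \<Rightarrow> bool" where
  "sSH_property T A \<longleftrightarrow>
     (\<forall>\<U> :: nat \<Rightarrow> 'a set set.
        (\<forall>n. (\<forall>U\<in>\<U> n. openin T U) \<and> T closure_of A \<subseteq> \<Union>(\<U> n)) \<longrightarrow>
        (\<exists>\<V> :: nat \<Rightarrow> 'a set set. (\<forall>n. finite (\<V> n) \<and> \<V> n \<subseteq> \<U> n) \<and>
           (\<forall>x\<in>A. eventually (\<lambda>n. x \<in> St (\<Union>(\<V> n)) (\<U> n)) sequentially)))"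

definition set_star_Hurewicz :: "'a topology \<Rightarrow> bool" where
  "set_star_Hurewicz X \<longleftrightarrow>
     (\<forall>A. A \<noteq> {} \<and> A \<subseteq> topspace X \<longrightarrow> sSH_property X A)"

definition rectangular_set_star_Hurewicz :: "'a topology \<Rightarrow> 'b topology \<Rightarrow> bool" where
  "rectangular_set_star_Hurewicz X Y \<longleftrightarrow>
     (\<forall>A B. A \<times> B \<noteq> {} \<and> A \<subseteq> topspace X \<and> B \<subseteq> topspace Y \<longrightarrow>
        sSH_property (prod_topology X Y) (A \<times> B))"

end

theory Submission
  imports Defs
begin

lemma choice2:
  assumes "\<And>n x. x \<in> K n \<Longrightarrow> \<exists>U G. P n x U G"
  shows "\<exists>Uf Gf. \<forall>n x. x \<in> K n \<longrightarrow> P n x (Uf n x) (Gf n x)"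
proof -
  define Uf where "Uf n x = (SOME U. \<exists>G. P n x U G)" for n x
  define Gf where "Gf n x = (SOME G. P n x (Uf n x) G)" for n x
  have "P n x (Uf n x) (Gf n x)" if "x \<in> K n" for n x
  proof -
    have "\<exists>G. P n x (Uf n x) G" unfolding Uf_def using assms[OF that] by (rule someI_ex)
    then show ?thesis unfolding Gf_def by (rule someI_ex)
  qed
  then show ?thesis by blast
qed

lemma choice3:
  assumes "\<forall>y\<in>K. \<exists>U G H. P y U G H"
  shows "\<exists>Uf Gf Hf. \<forall>y\<in>K. P y (Uf y) (Gf y) (Hf y)"
proof -
  define Uf where "Uf y = (SOME U. \<exists>G H. P y U G H)" for y
  define Gf where "Gf y = (SOME G. \<exists>H. P y (Uf y) G H)" for y
  define Hf where "Hf y = (SOME H. P y (Uf y) (Gf y) H)" for y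
  have "P y (Uf y) (Gf y) (Hf y)" if "y \<in> K" for y
  proof -
    have "\<exists>U G H. P y U G H" using assms that by blast
    then have "\<exists>G H. P y (Uf y) G H" unfolding Uf_def by (rule someI_ex)
    then have "\<exists>H. P y (Uf y) (Gf y) H" unfolding Gf_def by (rule someI_ex)
    then show ?thesis unfolding Hf_def by (rule someI_ex)
  qed
  then show ?thesis by blast
qed

lemma tube_lemma:
  assumes K: "compactin Y K" and x: "x \<in> topspace X"
    and op: "\<forall>U\<in>\<U>. openin (prod_topology X Y) U" and cov: "{x} \<times> K \<subseteq> \<Union>\<U>"
  shows "\<exists>F W. finite F \<and> F \<subseteq> \<U> \<and> openin X W \<and> x \<in> W \<and> (\<forall>y\<in>K. \<exists>U\<in>F. W \<times> {y} \<subseteq> U)"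
proof -
  have ch3: "\<forall>y\<in>K. \<exists>U G H. U \<in> \<U> \<and> openin X G \<and> openin Y H \<and> x \<in> G \<and> y \<in> H \<and> G \<times> H \<subseteq> U"
  proof
    fix y assume "y \<in> K"
    then have "(x,y) \<in> \<Union>\<U>" using cov by blast
    then obtain U where U: "U \<in> \<U>" "(x,y) \<in> U" by (rule UnionE)
    have "openin (prod_topology X Y) U" using op U(1) by (rule bspec)
    then have "\<exists>G H. openin X G \<and> openin Y H \<and> x \<in> G \<and> y \<in> H \<and> G \<times> H \<subseteq> U"
      using U(2) unfolding openin_prod_topology_alt by (elim allE impE)
    then obtain G H where "openin X G \<and> openin Y H \<and> x \<in> G \<and> y \<in> H \<and> G \<times> H \<subseteq> U"
      by (elim exE)
    then show "\<exists>U G H. U \<in> \<U> \<and> openin X G \<and> openin Y H \<and> x \<in> G \<and> y \<in> H \<and> G \<times> H \<subseteq> U"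
      using U(1) by blast
  qed
  have "\<exists>Uf Gf Hf. \<forall>y\<in>K. Uf y \<in> \<U> \<and> openin X (Gf y) \<and> openin Y (Hf y) \<and> x \<in> Gf y \<and> y \<in> Hf y \<and> Gf y \<times> Hf y \<subseteq> Uf y"
    by (rule choice3[OF ch3])
  then obtain Uf Gf Hf where f: "\<forall>y\<in>K. Uf y \<in> \<U> \<and> openin X (Gf y) \<and> openin Y (Hf y) \<and> x \<in> Gf y \<and> y \<in> Hf y \<and> Gf y \<times> Hf y \<subseteq> Uf y"
    by blast
  have fU: "Uf y \<in> \<U>" and fG: "openin X (Gf y)" and fH: "openin Y (Hf y)" and fx: "x \<in> Gf y"
    and fy: "y \<in> Hf y" and fs: "Gf y \<times> Hf y \<subseteq> Uf y" if "y \<in> K" for y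
    using f that by auto
  have o1: "\<forall>U\<in>Hf ` K. openin Y U" using fH by blast
  have o2: "K \<subseteq> \<Union>(Hf ` K)" using fy by blast
  have "\<exists>\<F>. finite \<F> \<and> \<F> \<subseteq> Hf ` K \<and> K \<subseteq> \<Union>\<F>"
    using K o1 o2 unfolding compactin_def by blast
  then obtain \<F> where F: "finite \<F>" "\<F> \<subseteq> Hf ` K" "K \<subseteq> \<Union>\<F>" by blast
  obtain T where T0: "T \<subseteq> K" "finite T" "\<F> = Hf ` T"
    using finite_subset_image[OF F(1) F(2)] by blast
  have T: "finite T" "T \<subseteq> K" "K \<subseteq> \<Union>(Hf ` T)" using T0 F(3) by auto
  define W where "W = \<Inter>(insert (topspace X) (Gf ` T))"
  have "openin X W" unfolding W_def
  proof (rule openin_Inter)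
    show "finite (insert (topspace X) (Gf ` T))" using T(1) by blast
    show "insert (topspace X) (Gf ` T) \<noteq> {}" by blast
    fix S assume "S \<in> insert (topspace X) (Gf ` T)"
    then show "openin X S" using fG T(2) by blast
  qed
  moreover have "x \<in> W" unfolding W_def using T(2) fx x by blast
  moreover have "\<forall>y\<in>K. \<exists>U\<in>Uf ` T. W \<times> {y} \<subseteq> U"
  proof
    fix y assume "y \<in> K"
    then obtain t where t: "t \<in> T" "y \<in> Hf t" using T by blast
    have "W \<subseteq> Gf t" unfolding W_def using t(1) by blast
    then have "W \<times> {y} \<subseteq> Gf t \<times> Hf t" using t(2) by blast
    also have "\<dots> \<subseteq> Uf t" using fs t(1) T(2) by blast
    finally show "\<exists>U\<in>Uf ` T. W \<times> {y} \<subseteq> U" using t by blast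
  qed
  moreover have "finite (Uf ` T)" using T(1) by blast
  moreover have "Uf ` T \<subseteq> \<U>" using T(2) fU by blast
  ultimately show ?thesis by blast
qed

theorem theorem3p17:
  fixes X :: "'a topology" and Y :: "'b topology"
  assumes "set_star_Hurewicz X" and "compact_space Y"
  shows "rectangular_set_star_Hurewicz X Y"
  unfolding rectangular_set_star_Hurewicz_def
proof (intro allI impI)
  fix A B assume AB: "A \<times> B \<noteq> {} \<and> A \<subseteq> topspace X \<and> B \<subseteq> topspace Y"
  let ?cA = "X closure_of A" and ?cB = "Y closure_of B"
  have Ane: "A \<noteq> {}" using AB by auto
  have sA: "sSH_property X A" using assms(1) AB Ane unfolding set_star_Hurewicz_def by blast
  have cB: "compactin Y ?cB" using assms(2) closedin_compact_space closedin_closure_of by blast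
  have Bsub: "B \<subseteq> ?cB" using AB closure_of_subset by blast
  show "sSH_property (prod_topology X Y) (A \<times> B)"
    unfolding sSH_property_def
  proof (intro allI impI)
    fix \<U> :: "nat \<Rightarrow> ('a \<times> 'b) set set"
    assume U: "\<forall>n. (\<forall>U\<in>\<U> n. openin (prod_topology X Y) U) \<and> prod_topology X Y closure_of (A \<times> B) \<subseteq> \<Union>(\<U> n)"
    have Ucov: "?cA \<times> ?cB \<subseteq> \<Union>(\<U> n)" for n using U by (simp add: closure_of_Times)
    have "\<exists>F W. finite F \<and> F \<subseteq> \<U> n \<and> openin X W \<and> x \<in> W \<and> (\<forall>y\<in>?cB. \<exists>U\<in>F. W \<times> {y} \<subseteq> U)"
      if x: "x \<in> ?cA" for n x
    proof -
      have xt: "x \<in> topspace X" using x closure_of_subset_topspace[of X A] by (rule subsetD[rotated])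
      have cv: "{x} \<times> ?cB \<subseteq> \<Union>(\<U> n)" using Ucov x by blast
      have op: "\<forall>U\<in>\<U> n. openin (prod_topology X Y) U" using U by blast
      show "\<exists>F W. finite F \<and> F \<subseteq> \<U> n \<and> openin X W \<and> x \<in> W \<and> (\<forall>y\<in>?cB. \<exists>U\<in>F. W \<times> {y} \<subseteq> U)"
        by (rule tube_lemma[OF cB xt op cv])
    qed
    note ch2 = this
    have "\<exists>Ff Wf. \<forall>n x. x \<in> (\<lambda>n. ?cA) n \<longrightarrow> finite (Ff n x) \<and> Ff n x \<subseteq> \<U> n \<and> openin X (Wf n x) \<and> x \<in> Wf n x \<and> (\<forall>y\<in>?cB. \<exists>U\<in>Ff n x. Wf n x \<times> {y} \<subseteq> U)"
      by (rule choice2[OF ch2])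
    then obtain Ff Wf where FW: "\<And>n x. x \<in> ?cA \<Longrightarrow> finite (Ff n x) \<and> Ff n x \<subseteq> \<U> n \<and> openin X (Wf n x) \<and> x \<in> Wf n x \<and> (\<forall>y\<in>?cB. \<exists>U\<in>Ff n x. Wf n x \<times> {y} \<subseteq> U)"
      by blast
    define \<W> where "\<W> n = Wf n ` ?cA" for n
    have Wh: "\<forall>n. (\<forall>U\<in>\<W> n. openin X U) \<and> ?cA \<subseteq> \<Union>(\<W> n)"
    proof
      fix n
      have "\<forall>U\<in>\<W> n. openin X U" unfolding \<W>_def using FW by auto
      moreover have "?cA \<subseteq> \<Union>(\<W> n)"
      proof
        fix x assume "x \<in> ?cA"
        then show "x \<in> \<Union>(\<W> n)" unfolding \<W>_def using FW[of x n] by auto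
      qed
      ultimately show "(\<forall>U\<in>\<W> n. openin X U) \<and> ?cA \<subseteq> \<Union>(\<W> n)" by (rule conjI)
    qed
    have "\<exists>\<V>' :: nat \<Rightarrow> 'a set set. (\<forall>n. finite (\<V>' n) \<and> \<V>' n \<subseteq> \<W> n) \<and>
           (\<forall>x\<in>A. eventually (\<lambda>n. x \<in> St (\<Union>(\<V>' n)) (\<W> n)) sequentially)"
      using sA[unfolded sSH_property_def, rule_format, OF Wh[rule_format]] .
    then obtain \<V>' where V': "\<forall>n. finite (\<V>' n) \<and> \<V>' n \<subseteq> \<W> n"
      and ev: "\<forall>x\<in>A. eventually (\<lambda>n. x \<in> St (\<Union>(\<V>' n)) (\<W> n)) sequentially"
      by blast
    have "\<forall>n. \<exists>S. S \<subseteq> ?cA \<and> finite S \<and> \<V>' n = Wf n ` S"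
    proof
      fix n
      have "finite (\<V>' n)" "\<V>' n \<subseteq> Wf n ` ?cA" using V' unfolding \<W>_def by auto
      then show "\<exists>S. S \<subseteq> ?cA \<and> finite S \<and> \<V>' n = Wf n ` S" using finite_subset_image by blast
    qed
    note ch1 = this
    have "\<exists>Sf. \<forall>n. Sf n \<subseteq> ?cA \<and> finite (Sf n) \<and> \<V>' n = Wf n ` Sf n"
      by (rule choice[OF ch1])
    then obtain Sf where S: "\<And>n. Sf n \<subseteq> ?cA \<and> finite (Sf n) \<and> \<V>' n = Wf n ` Sf n"
      by blast
    define \<V> where "\<V> n = (\<Union>x\<in>Sf n. Ff n x)" for n
    show "\<exists>\<V>. (\<forall>n. finite (\<V> n) \<and> \<V> n \<subseteq> \<U> n) \<and>
           (\<forall>z\<in>A \<times> B. eventually (\<lambda>n. z \<in> St (\<Union>(\<V> n)) (\<U> n)) sequentially)"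
    proof (rule exI[of _ \<V>], intro conjI allI ballI)
      fix n show "finite (\<V> n)" unfolding \<V>_def
      proof (rule finite_UN_I)
        show "finite (Sf n)" using S[of n] by blast
      next
        fix x assume "x \<in> Sf n"
        then have "x \<in> ?cA" using S[of n] by blast
        then show "finite (Ff n x)" using FW[of x n] by blast
      qed
      show "\<V> n \<subseteq> \<U> n" unfolding \<V>_def
      proof (rule UN_least)
        fix x assume "x \<in> Sf n"
        then have "x \<in> ?cA" using S[of n] by blast
        then show "Ff n x \<subseteq> \<U> n" using FW[of x n] by blast
      qed
    next
      fix z assume z: "z \<in> A \<times> B"
      then obtain a b where ab: "z = (a,b)" "a \<in> A" "b \<in> B" by blast
      have b: "b \<in> ?cB" using ab Bsub by blast
      have eva: "eventually (\<lambda>n. a \<in> St (\<Union>(\<V>' n)) (\<W> n)) sequentially"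
        using ev ab(2) by blast
      show "eventually (\<lambda>n. z \<in> St (\<Union>(\<V> n)) (\<U> n)) sequentially"
      proof (rule eventually_mono[OF eva])
        fix n assume h: "a \<in> St (\<Union>(\<V>' n)) (\<W> n)"
        then obtain W where W: "W \<in> \<W> n" "W \<inter> \<Union>(\<V>' n) \<noteq> {}" "a \<in> W"
          unfolding St_def by blast
        then obtain x where x: "x \<in> ?cA" "W = Wf n x" unfolding \<W>_def by blast
        from W(2) obtain p where p: "p \<in> W" "p \<in> \<Union>(\<V>' n)" by blast
        then obtain xi where xi0: "xi \<in> Sf n" "p \<in> Wf n xi" using S[of n] by blast
        have xi: "xi \<in> ?cA" using xi0 S[of n] by blast
        obtain U where U1: "U \<in> Ff n x" "Wf n x \<times> {b} \<subseteq> U" using FW[OF x(1)] b by blast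
        obtain U' where U2: "U' \<in> Ff n xi" "Wf n xi \<times> {b} \<subseteq> U'" using FW[OF xi] b by blast
        have U'V: "U' \<in> \<V> n" unfolding \<V>_def using U2(1) xi0(1) by blast
        have pb: "(p,b) \<in> U" using U1(2) p(1) x(2) by blast
        have pb': "(p,b) \<in> U'" using U2(2) xi0(2) by blast
        have ab': "(a,b) \<in> U" using U1(2) W(3) x(2) by blast
        have UU: "U \<in> \<U> n" using U1(1) FW[OF x(1)] by blast
        have "U \<inter> \<Union>(\<V> n) \<noteq> {}" using pb pb' U'V by blast
        then show "z \<in> St (\<Union>(\<V> n)) (\<U> n)" unfolding St_def ab(1) using UU ab' by blast
      qed
    qed
  qed
qed

end
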